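(* Let $\mathcal{S}=\{s_1,\dots,s_N\}$ be a finite state space, $\mathcal{A}$ a finite action space, $\gamma\in(0,1)$, and consider the real MDP $\langle\mathcal{S},\mathcal{A},\mathbb{P},R,\gamma\rangle$ and the DT MDP $\langle\mathcal{S},\mathcal{A},\mathbb{P}',R',\gamma\rangle$. Then for all $i,j$, $$|V^*_{\mathrm{real}}(s_i)-V^*_{\mathrm{DT}}(s_j)|\le\bar d(s_i,s_j).$$
   Context: $\mathbb{P}(\cdot|s,a),\mathbb{P}'(\cdot|s,a)$ are probability distributions on $\mathcal{S}$; $R,R':\mathcal{S}\times\mathcal{A}\to\mathbb{R}$. $V^*_{\mathrm{real}}$ is the unique solution of $V(s)=\max_a\{R(s,a)+\gamma\sum_{\tilde s}\mathbb{P}(\tilde s|s,a)V(\tilde s)\}$, and $V^*_{\mathrm{DT}}$ the analogue with $\mathbb{P}',R'$. For distributions $P,Q$ on $\mathcal{S}$ and a cost $d:\mathcal{S}\times\mathcal{S}\to[0,\infty)$ (not required to vanish on the diagonal; first argument a real-MDP state, second a DT-MDP state), $W_1(P,Q;d)=\min_\Lambda\sum_{i,j}\lambda_{i,j}d(s_i,s_j)$ over nonnegative $N\times N$ matrices with row sums $P(s_i)$ and column sums $Q(s_j)$. Define $d_0\equiv0$ and $d_n(s_i,s_j)=\max_a\{|R(s_i,a)-R'(s_j,a)|+\gamma W_1(\mathbb{P}(\cdot|s_i,a),\mathbb{P}'(\cdot|s_j,a);d_{n-1})\}$; the DT bisimulation metric $\bar d$ is the pointwise limit of the nondecreasing sequence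 $(d_n)$. *)

theory Defs
  imports "HOL-Analysis.Analysis"
begin

text \<open>Finite state type 's and finite action type 'a. Transition kernels are
  functions P s a s' (probability of reaching s' from s under a);
  rewards R s a.\<close>

definition is_kernel :: "('s::finite \<Rightarrow> 'a \<Rightarrow> 's \<Rightarrow> real) \<Rightarrow> bool" where
  "is_kernel P \<longleftrightarrow> (\<forall>s a s'. 0 \<le> P s a s') \<and> (\<forall>s a. (\<Sum>s'\<in>UNIV. P s a s') = 1)"

definition bellman :: "('s::finite \<Rightarrow> 'a::finite \<Rightarrow> 's \<Rightarrow> real) \<Rightarrow> ('s \<Rightarrow> 'a \<Rightarrow> real) \<Rightarrow> real
    \<Rightarrow> ('s \<Rightarrow> real) \<Rightarrow> 's \<Rightarrow> real" where
  "bellman P R \<gamma> V s = Max (range (\<lambda>a. R s a + \<gamma> * (\<Sum>s'\<in>UNIV. P s a s' * V s')))"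

definition opt_value :: "('s::finite \<Rightarrow> 'a::finite \<Rightarrow> 's \<Rightarrow> real) \<Rightarrow> ('s \<Rightarrow> 'a \<Rightarrow> real) \<Rightarrow> real
    \<Rightarrow> 's \<Rightarrow> real" where
  "opt_value P R \<gamma> = (THE V. \<forall>s. V s = bellman P R \<gamma> V s)"

text \<open>Wasserstein-1 distance with a general (not necessarily diagonal-vanishing) cost:
  minimum (here: infimum, which is attained) of the transport cost over couplings.\<close>

definition couplings :: "('s::finite \<Rightarrow> real) \<Rightarrow> ('s \<Rightarrow> real) \<Rightarrow> ('s \<Rightarrow> 's \<Rightarrow> real) set" where
  "couplings p q = {L. (\<forall>i j. 0 \<le> L i j) \<and> (\<forall>i. (\<Sum>j\<in>UNIV. L i j) = p i)
                        \<and> (\<forall>j. (\<Sum>i\<in>UNIV. L i j) = q j)}"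

definition W1 :: "('s::finite \<Rightarrow> real) \<Rightarrow> ('s \<Rightarrow> real) \<Rightarrow> ('s \<Rightarrow> 's \<Rightarrow> real) \<Rightarrow> real" where
  "W1 p q d = Inf ((\<lambda>L. \<Sum>i\<in>UNIV. \<Sum>j\<in>UNIV. L i j * d i j) ` couplings p q)"

fun dseq :: "('s::finite \<Rightarrow> 'a::finite \<Rightarrow> 's \<Rightarrow> real) \<Rightarrow> ('s \<Rightarrow> 'a \<Rightarrow> real)
    \<Rightarrow> ('s \<Rightarrow> 'a \<Rightarrow> 's \<Rightarrow> real) \<Rightarrow> ('s \<Rightarrow> 'a \<Rightarrow> real) \<Rightarrow> real \<Rightarrow> nat \<Rightarrow> 's \<Rightarrow> 's \<Rightarrow> real" where
  "dseq P R P' R' \<gamma> 0 = (\<lambda>_ _. 0)"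
| "dseq P R P' R' \<gamma> (Suc n) = (\<lambda>si sj. Max (range (\<lambda>a.
      \<bar>R si a - R' sj a\<bar> + \<gamma> * W1 (P si a) (P' sj a) (dseq P R P' R' \<gamma> n))))"

definition dbar :: "('s::finite \<Rightarrow> 'a::finite \<Rightarrow> 's \<Rightarrow> real) \<Rightarrow> ('s \<Rightarrow> 'a \<Rightarrow> real)
    \<Rightarrow> ('s \<Rightarrow> 'a \<Rightarrow> 's \<Rightarrow> real) \<Rightarrow> ('s \<Rightarrow> 'a \<Rightarrow> real) \<Rightarrow> real \<Rightarrow> 's \<Rightarrow> 's \<Rightarrow> real" where
  "dbar P R P' R' \<gamma> si sj = lim (\<lambda>n. dseq P R P' R' \<gamma> n si sj)"

end

theory Submission
  imports Defs
begin

lemma max_diff: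
  fixes f g h :: "'a::finite \<Rightarrow> real"
  assumes "\<forall>a. \<bar>f a - g a\<bar> \<le> h a"
  shows "\<bar>Max (range f) - Max (range g)\<bar> \<le> Max (range h)"
proof -
  have "Max (range f) \<in> range f" by (rule Max_in) auto
  then obtain a where a: "Max (range f) = f a" by (metis rangeE)
  have "Max (range g) \<in> range g" by (rule Max_in) auto
  then obtain b where b: "Max (range g) = g b" by (metis rangeE)
  have "g a \<le> Max (range g)" "f b \<le> Max (range f)" "h a \<le> Max (range h)" "h b \<le> Max (range h)"
    by simp_all
  then show ?thesis using assms[rule_format, of a] assms[rule_format, of b] a b by linarith
qed

lemma prod_coupling:
  fixes p q :: "'s::finite \<Rightarrow> real"
  assumes "\<forall>i. 0 \<le> p i" "sum p UNIV = 1" "\<forall>i. 0 \<le> q i" "sum q UNIV = 1"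
  shows "(\<lambda>i j. p i * q j) \<in> couplings p q"
  unfolding couplings_def using assms
  by (auto simp: sum_distrib_left[symmetric] sum_distrib_right[symmetric])

lemma W1_lower:
  assumes "\<forall>i j. 0 \<le> D i j" "L \<in> couplings p q"
  shows "W1 p q D \<le> (\<Sum>i\<in>UNIV. \<Sum>j\<in>UNIV. L i j * D i j)"
  unfolding W1_def
proof (rule cInf_lower)
  show "(\<Sum>i\<in>UNIV. \<Sum>j\<in>UNIV. L i j * D i j) \<in> (\<lambda>L. \<Sum>i\<in>UNIV. \<Sum>j\<in>UNIV. L i j * D i j) ` couplings p q"
    using assms by auto
  show "bdd_below ((\<lambda>L. \<Sum>i\<in>UNIV. \<Sum>j\<in>UNIV. L i j * D i j) ` couplings p q)"
    by (rule bdd_belowI[of _ 0]) (use assms in \<open>auto simp: couplings_def intro!: sum_nonneg\<close>)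
qed

lemma W1_greatest:
  assumes "couplings p q \<noteq> {}" "\<forall>L\<in>couplings p q. c \<le> (\<Sum>i\<in>UNIV. \<Sum>j\<in>UNIV. L i j * D i j)"
  shows "c \<le> W1 p q D"
  unfolding W1_def using assms by (intro cInf_greatest) auto

lemma transport:
  assumes "L \<in> couplings p q"
  shows "(\<Sum>i\<in>UNIV. p i * V i) - (\<Sum>j\<in>UNIV. q j * V' j)
     = (\<Sum>i\<in>UNIV. \<Sum>j\<in>UNIV. L i j * (V i - V' j))"
proof -
  have 1: "(\<Sum>i\<in>UNIV. p i * V i) = (\<Sum>i\<in>UNIV. \<Sum>j\<in>UNIV. L i j * V i)"
    using assms by (auto simp: couplings_def sum_distrib_right[symmetric])
  have 2: "(\<Sum>j\<in>UNIV. q j * V' j) = (\<Sum>j\<in>UNIV. \<Sum>i\<in>UNIV. L i j * V' j)"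
    using assms by (auto simp: couplings_def sum_distrib_right[symmetric])
  also have "\<dots> = (\<Sum>i\<in>UNIV. \<Sum>j\<in>UNIV. L i j * V' j)" by (rule sum.swap)
  finally show ?thesis using 1
    by (simp add: sum_subtractf[symmetric] right_diff_distrib)
qed

lemma W1_bound:
  fixes p q :: "'s::finite \<Rightarrow> real"
  assumes "\<forall>i. 0 \<le> p i" "sum p UNIV = 1" "\<forall>i. 0 \<le> q i" "sum q UNIV = 1"
    and "\<forall>i j. \<bar>V i - V' j\<bar> \<le> D i j"
  shows "\<bar>(\<Sum>i\<in>UNIV. p i * V i) - (\<Sum>j\<in>UNIV. q j * V' j)\<bar> \<le> W1 p q D"
proof (rule W1_greatest)
  show "couplings p q \<noteq> {}" using prod_coupling[OF assms(1-4)] by auto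
  show "\<forall>L\<in>couplings p q. \<bar>(\<Sum>i\<in>UNIV. p i * V i) - (\<Sum>j\<in>UNIV. q j * V' j)\<bar>
        \<le> (\<Sum>i\<in>UNIV. \<Sum>j\<in>UNIV. L i j * D i j)"
  proof
    fix L assume L: "L \<in> couplings p q"
    have "\<bar>(\<Sum>i\<in>UNIV. p i * V i) - (\<Sum>j\<in>UNIV. q j * V' j)\<bar>
       = \<bar>\<Sum>i\<in>UNIV. \<Sum>j\<in>UNIV. L i j * (V i - V' j)\<bar>" using transport[OF L] by simp
    also have "\<dots> \<le> (\<Sum>i\<in>UNIV. \<bar>\<Sum>j\<in>UNIV. L i j * (V i - V' j)\<bar>)" by (rule sum_abs)
    also have "\<dots> \<le> (\<Sum>i\<in>UNIV. \<Sum>j\<in>UNIV. \<bar>L i j * (V i - V' j)\<bar>)"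
      by (intro sum_mono sum_abs)
    also have "\<dots> \<le> (\<Sum>i\<in>UNIV. \<Sum>j\<in>UNIV. L i j * D i j)"
    proof (intro sum_mono)
      fix i j
      have "0 \<le> L i j" using L by (auto simp: couplings_def)
      then show "\<bar>L i j * (V i - V' j)\<bar> \<le> L i j * D i j"
        using assms(5) by (simp add: abs_mult mult_left_mono)
    qed
    finally show "\<bar>(\<Sum>i\<in>UNIV. p i * V i) - (\<Sum>j\<in>UNIV. q j * V' j)\<bar>
        \<le> (\<Sum>i\<in>UNIV. \<Sum>j\<in>UNIV. L i j * D i j)" .
  qed
qed

lemma W1_const_le:
  fixes p q :: "'s::finite \<Rightarrow> real"
  assumes "\<forall>i. 0 \<le> p i" "sum p UNIV = 1" "\<forall>i. 0 \<le> q i" "sum q UNIV = 1"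
    and "\<forall>i j. 0 \<le> D i j" "\<forall>i j. D i j \<le> c"
  shows "W1 p q D \<le> c"
proof -
  have "W1 p q D \<le> (\<Sum>i\<in>UNIV. \<Sum>j\<in>UNIV. p i * q j * D i j)"
    by (rule W1_lower[OF assms(5) prod_coupling[OF assms(1-4)]])
  also have "\<dots> \<le> (\<Sum>i\<in>UNIV. \<Sum>j\<in>UNIV. p i * q j * c)"
    using assms by (intro sum_mono mult_left_mono) auto
  also have "\<dots> = c"
    using assms by (simp add: sum_distrib_left[symmetric] sum_distrib_right[symmetric])
  finally show ?thesis .
qed

lemma W1_nonneg:
  fixes p q :: "'s::finite \<Rightarrow> real"
  assumes "\<forall>i. 0 \<le> p i" "sum p UNIV = 1" "\<forall>i. 0 \<le> q i" "sum q UNIV = 1"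
    and "\<forall>i j. 0 \<le> D i j"
  shows "0 \<le> W1 p q D"
proof (rule W1_greatest)
  show "couplings p q \<noteq> {}" using prod_coupling[OF assms(1-4)] by auto
  show "\<forall>L\<in>couplings p q. 0 \<le> (\<Sum>i\<in>UNIV. \<Sum>j\<in>UNIV. L i j * D i j)"
    using assms(5) by (auto simp: couplings_def intro!: sum_nonneg)
qed

lemma W1_mono:
  fixes p q :: "'s::finite \<Rightarrow> real"
  assumes "\<forall>i. 0 \<le> p i" "sum p UNIV = 1" "\<forall>i. 0 \<le> q i" "sum q UNIV = 1"
    and "\<forall>i j. 0 \<le> D i j" "\<forall>i j. D i j \<le> D' i j"
  shows "W1 p q D \<le> W1 p q D'"
proof (rule W1_greatest)
  show "couplings p q \<noteq> {}" using prod_coupling[OF assms(1-4)] by auto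
  show "\<forall>L\<in>couplings p q. W1 p q D \<le> (\<Sum>i\<in>UNIV. \<Sum>j\<in>UNIV. L i j * D' i j)"
  proof
    fix L assume L: "L \<in> couplings p q"
    have "W1 p q D \<le> (\<Sum>i\<in>UNIV. \<Sum>j\<in>UNIV. L i j * D i j)" by (rule W1_lower[OF assms(5) L])
    also have "\<dots> \<le> (\<Sum>i\<in>UNIV. \<Sum>j\<in>UNIV. L i j * D' i j)"
      using L assms(6) by (intro sum_mono mult_left_mono) (auto simp: couplings_def)
    finally show "W1 p q D \<le> (\<Sum>i\<in>UNIV. \<Sum>j\<in>UNIV. L i j * D' i j)" .
  qed
qed

lemma kernelD:
  assumes "is_kernel P"
  shows "\<forall>i. 0 \<le> P s a i" "sum (P s a) UNIV = 1"
  using assms by (auto simp: is_kernel_def)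

lemma bellman_step:
  assumes "is_kernel P" "is_kernel P'" "0 \<le> \<gamma>" "\<forall>i j. \<bar>V i - V' j\<bar> \<le> D i j"
  shows "\<bar>bellman P R \<gamma> V si - bellman P' R' \<gamma> V' sj\<bar>
     \<le> Max (range (\<lambda>a. \<bar>R si a - R' sj a\<bar> + \<gamma> * W1 (P si a) (P' sj a) D))"
  unfolding bellman_def
proof (rule max_diff, rule allI)
  fix a
  have w: "\<bar>(\<Sum>i\<in>UNIV. P si a i * V i) - (\<Sum>j\<in>UNIV. P' sj a j * V' j)\<bar> \<le> W1 (P si a) (P' sj a) D"
    by (rule W1_bound[OF kernelD[OF assms(1)] kernelD[OF assms(2)] assms(4)])
  have "\<bar>\<gamma> * ((\<Sum>i\<in>UNIV. P si a i * V i) - (\<Sum>j\<in>UNIV. P' sj a j * V' j))\<bar> \<le> \<gamma> * W1 (P si a) (P' sj a) D"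
    using w assms(3) by (simp add: abs_mult mult_left_mono)
  then show "\<bar>R si a + \<gamma> * (\<Sum>s'\<in>UNIV. P si a s' * V s') - (R' sj a + \<gamma> * (\<Sum>s'\<in>UNIV. P' sj a s' * V' s'))\<bar>
         \<le> \<bar>R si a - R' sj a\<bar> + \<gamma> * W1 (P si a) (P' sj a) D"
    by (simp add: right_diff_distrib)
qed

lemma contraction:
  assumes "is_kernel P" "0 \<le> \<gamma>" "0 \<le> c" "\<forall>s. \<bar>V s - W s\<bar> \<le> c"
  shows "\<bar>bellman P R \<gamma> V s - bellman P R \<gamma> W s\<bar> \<le> \<gamma> * c"
  unfolding bellman_def
proof -
  have "\<bar>Max (range (\<lambda>a. R s a + \<gamma> * (\<Sum>s'\<in>UNIV. P s a s' * V s'))) -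
         Max (range (\<lambda>a. R s a + \<gamma> * (\<Sum>s'\<in>UNIV. P s a s' * W s')))\<bar> \<le> Max (range (\<lambda>a::'b. \<gamma> * c))"
  proof (rule max_diff, rule allI)
    fix a
    have "\<bar>(\<Sum>s'\<in>UNIV. P s a s' * V s') - (\<Sum>s'\<in>UNIV. P s a s' * W s')\<bar>
        = \<bar>\<Sum>s'\<in>UNIV. P s a s' * (V s' - W s')\<bar>"
      by (simp add: sum_subtractf[symmetric] right_diff_distrib)
    also have "\<dots> \<le> (\<Sum>s'\<in>UNIV. \<bar>P s a s' * (V s' - W s')\<bar>)" by (rule sum_abs)
    also have "\<dots> \<le> (\<Sum>s'\<in>UNIV. P s a s' * c)"
    proof (rule sum_mono)
      fix s' have "0 \<le> P s a s'" using assms(1) by (auto simp: is_kernel_def)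
      then show "\<bar>P s a s' * (V s' - W s')\<bar> \<le> P s a s' * c"
        using assms(4) by (simp add: abs_mult mult_left_mono)
    qed
    also have "\<dots> = c" using kernelD(2)[OF assms(1)] by (simp add: sum_distrib_right[symmetric])
    finally have "\<bar>(\<Sum>s'\<in>UNIV. P s a s' * V s') - (\<Sum>s'\<in>UNIV. P s a s' * W s')\<bar> \<le> c" .
    then have "\<bar>\<gamma> * ((\<Sum>s'\<in>UNIV. P s a s' * V s') - (\<Sum>s'\<in>UNIV. P s a s' * W s'))\<bar> \<le> \<gamma> * c"
      using assms(2) by (simp add: abs_mult mult_left_mono)
    then show "\<bar>R s a + \<gamma> * (\<Sum>s'\<in>UNIV. P s a s' * V s') - (R s a + \<gamma> * (\<Sum>s'\<in>UNIV. P s a s' * W s'))\<bar> \<le> \<gamma> * c"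
      by (simp add: right_diff_distrib)
  qed
  then show "\<bar>Max (range (\<lambda>a. R s a + \<gamma> * (\<Sum>s'\<in>UNIV. P s a s' * V s'))) -
         Max (range (\<lambda>a. R s a + \<gamma> * (\<Sum>s'\<in>UNIV. P s a s' * W s')))\<bar> \<le> \<gamma> * c" by simp
qed

lemma fixpoint_unique:
  assumes "is_kernel P" "0 \<le> \<gamma>" "\<gamma> < 1"
    and "\<forall>s. W s = bellman P R \<gamma> W s" "\<forall>s. W' s = bellman P R \<gamma> W' s"
  shows "W = W'"
proof -
  define m where "m = Max (range (\<lambda>s. \<bar>W s - W' s\<bar>))"
  have le: "\<forall>s. \<bar>W s - W' s\<bar> \<le> m" unfolding m_def by simp
  have m0: "0 \<le> m" using le by (meson abs_ge_zero order_trans)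
  have "\<forall>s. \<bar>W s - W' s\<bar> \<le> \<gamma> * m"
    using contraction[OF assms(1,2) m0 le] assms(4,5) by metis
  then have "m \<le> \<gamma> * m" unfolding m_def by (intro Max.boundedI) auto
  then have "m = 0" using m0 assms(3)
    by (metis mult_less_cancel_right2 not_le order_le_less)
  then show ?thesis using le by (auto intro!: ext)
qed

lemma fixpoint_exists:
  assumes "is_kernel P" "0 \<le> \<gamma>" "\<gamma> < 1"
  shows "\<exists>V. (\<forall>s. V s = bellman P R \<gamma> V s) \<and>
    (\<forall>s. (\<lambda>n. ((bellman P R \<gamma>) ^^ n) (\<lambda>_. 0) s) \<longlonglongrightarrow> V s)"
proof -
  define T where "T = bellman P R \<gamma>"
  define Vn where "Vn n = (T ^^ n) (\<lambda>_. 0)" for n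
  have VS: "Vn (Suc n) = T (Vn n)" for n by (simp add: Vn_def)
  define M where "M = Max (range (\<lambda>s. \<bar>Vn 1 s - Vn 0 s\<bar>))"
  have M1: "\<forall>s. \<bar>Vn 1 s - Vn 0 s\<bar> \<le> M" unfolding M_def by simp
  have M0: "0 \<le> M" using M1 by (meson abs_ge_zero order_trans)
  have diff: "\<forall>s. \<bar>Vn (Suc k) s - Vn k s\<bar> \<le> \<gamma> ^ k * M" for k
  proof (induction k)
    case 0 then show ?case using M1 by simp
  next
    case (Suc k)
    show ?case
    proof
      fix s
      have "\<bar>T (Vn (Suc k)) s - T (Vn k) s\<bar> \<le> \<gamma> * (\<gamma> ^ k * M)"
        unfolding T_def using Suc assms M0 by (intro contraction) auto
      then show "\<bar>Vn (Suc (Suc k)) s - Vn (Suc k) s\<bar> \<le> \<gamma> ^ Suc k * M"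
        by (simp add: VS)
    qed
  qed
  define V where "V s = (\<Sum>k. Vn (Suc k) s - Vn k s)" for s
  have conv: "(\<lambda>n. Vn n s) \<longlonglongrightarrow> V s" for s
  proof -
    have "summable (\<lambda>k. Vn (Suc k) s - Vn k s)"
    proof (rule summable_comparison_test)
      show "\<exists>N. \<forall>n\<ge>N. norm (Vn (Suc n) s - Vn n s) \<le> \<gamma> ^ n * M" using diff by auto
      show "summable (\<lambda>n. \<gamma> ^ n * M)"
        using assms by (intro summable_mult2 summable_geometric) auto
    qed
    then have "(\<lambda>n. \<Sum>k<n. Vn (Suc k) s - Vn k s) \<longlonglongrightarrow> V s"
      unfolding V_def by (rule summable_LIMSEQ)
    moreover have "(\<Sum>k<n. Vn (Suc k) s - Vn k s) = Vn n s" for n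
    proof -
      have "(\<Sum>k<n. Vn (Suc k) s - Vn k s) = Vn n s - Vn 0 s" by (rule sum_lessThan_telescope)
      then show ?thesis by (simp add: Vn_def)
    qed
    ultimately show ?thesis by simp
  qed
  have fixp: "V s = T V s" for s
  proof -
    define c where "c n = (\<Sum>s'\<in>UNIV. \<bar>V s' - Vn n s'\<bar>)" for n
    have c0: "c \<longlonglongrightarrow> 0"
    proof -
      have "c \<longlonglongrightarrow> (\<Sum>s'\<in>UNIV. \<bar>V s' - V s'\<bar>)"
        unfolding c_def by (intro tendsto_intros conv)
      then show ?thesis by simp
    qed
    have "(\<lambda>n. T V s - Vn (Suc n) s) \<longlonglongrightarrow> 0"
    proof (rule Lim_null_comparison)
      show "\<forall>\<^sub>F n in sequentially. norm (T V s - Vn (Suc n) s) \<le> \<gamma> * c n"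
      proof (rule always_eventually, rule allI)
        fix n
        have "\<forall>s'. \<bar>V s' - Vn n s'\<bar> \<le> c n"
          unfolding c_def by (auto intro: member_le_sum)
        moreover have "0 \<le> c n" unfolding c_def by (auto intro: sum_nonneg)
        ultimately show "norm (T V s - Vn (Suc n) s) \<le> \<gamma> * c n"
          unfolding T_def VS using assms by (auto intro: contraction simp: T_def)
      qed
      show "(\<lambda>n. \<gamma> * c n) \<longlonglongrightarrow> 0" using tendsto_mult_right_zero[OF c0] by simp
    qed
    moreover have "(\<lambda>n. T V s - Vn (Suc n) s) \<longlonglongrightarrow> T V s - V s"
      by (intro tendsto_intros LIMSEQ_Suc conv)
    ultimately show ?thesis using LIMSEQ_unique by fastforce
  qed
  show ?thesis using fixp conv unfolding T_def Vn_def by blast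
qed

lemma opt_value_limit:
  assumes "is_kernel P" "0 \<le> \<gamma>" "\<gamma> < 1"
  shows "(\<lambda>n. ((bellman P R \<gamma>) ^^ n) (\<lambda>_. 0) s) \<longlonglongrightarrow> opt_value P R \<gamma> s"
proof -
  obtain V where V: "\<forall>s. V s = bellman P R \<gamma> V s"
    "\<forall>s. (\<lambda>n. ((bellman P R \<gamma>) ^^ n) (\<lambda>_. 0) s) \<longlonglongrightarrow> V s"
    using fixpoint_exists[OF assms] by blast
  have "opt_value P R \<gamma> = V"
    unfolding opt_value_def
    by (rule the_equality) (use V fixpoint_unique[OF assms] in auto)
  then show ?thesis using V by simp
qed

lemma dseq_nonneg:
  assumes "is_kernel P" "is_kernel P'" "0 \<le> \<gamma>"
  shows "\<forall>i j. 0 \<le> dseq P R P' R' \<gamma> n i j"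
proof (induction n)
  case 0 then show ?case by simp
next
  case (Suc n)
  show ?case
  proof (intro allI)
    fix i j
    obtain a :: 'b where True by simp
    have "0 \<le> W1 (P i a) (P' j a) (dseq P R P' R' \<gamma> n)"
      by (rule W1_nonneg[OF kernelD[OF assms(1)] kernelD[OF assms(2)] Suc])
    then have "0 \<le> \<bar>R i a - R' j a\<bar> + \<gamma> * W1 (P i a) (P' j a) (dseq P R P' R' \<gamma> n)"
      using assms(3) by simp
    also have "\<dots> \<le> dseq P R P' R' \<gamma> (Suc n) i j" by simp
    finally show "0 \<le> dseq P R P' R' \<gamma> (Suc n) i j" .
  qed
qed

lemma dseq_bound:
  assumes "is_kernel P" "is_kernel P'" "0 \<le> \<gamma>" "\<gamma> < 1"
  shows "\<forall>i j. dseq P R P' R' \<gamma> n i j \<le> Max (range (\<lambda>(s,t,a). \<bar>R s a - R' t a\<bar>)) / (1 - \<gamma>)"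
proof -
  define C where "C = Max (range (\<lambda>(s,t,a). \<bar>R s a - R' t a\<bar>))"
  have C: "\<bar>R s a - R' t a\<bar> \<le> C" for s t a
  proof -
    have "(\<lambda>(s,t,a). \<bar>R s a - R' t a\<bar>) (s,t,a) \<le> C" unfolding C_def
      by (rule Max_ge) (simp, rule rangeI)
    then show ?thesis by simp
  qed
  have C0: "0 \<le> C" using C by (meson abs_ge_zero order_trans)
  define B where "B = C / (1 - \<gamma>)"
  have B0: "0 \<le> B" unfolding B_def using C0 assms by simp
  have CB: "C + \<gamma> * B = B" unfolding B_def using assms by (simp add: field_simps)
  have "\<forall>i j. dseq P R P' R' \<gamma> n i j \<le> B"
  proof (induction n)
    case 0 then show ?case using B0 by simp
  next
    case (Suc n)
    show ?case
    proof (intro allI)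
      fix i j
      show "dseq P R P' R' \<gamma> (Suc n) i j \<le> B"
        unfolding dseq.simps
      proof (rule Max.boundedI)
        show "finite (range (\<lambda>a. \<bar>R i a - R' j a\<bar> + \<gamma> * W1 (P i a) (P' j a) (dseq P R P' R' \<gamma> n)))" by simp
        show "range (\<lambda>a. \<bar>R i a - R' j a\<bar> + \<gamma> * W1 (P i a) (P' j a) (dseq P R P' R' \<gamma> n)) \<noteq> {}" by simp
        fix x assume "x \<in> range (\<lambda>a. \<bar>R i a - R' j a\<bar> + \<gamma> * W1 (P i a) (P' j a) (dseq P R P' R' \<gamma> n))"
        then obtain a where x: "x = \<bar>R i a - R' j a\<bar> + \<gamma> * W1 (P i a) (P' j a) (dseq P R P' R' \<gamma> n)" by auto
        have "W1 (P i a) (P' j a) (dseq P R P' R' \<gamma> n) \<le> B"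
          by (rule W1_const_le[OF kernelD[OF assms(1)] kernelD[OF assms(2)] dseq_nonneg[OF assms(1-3)] Suc])
        then have "\<gamma> * W1 (P i a) (P' j a) (dseq P R P' R' \<gamma> n) \<le> \<gamma> * B"
          using assms(3) by (simp add: mult_left_mono)
        then show "x \<le> B" using x C[of i a j] CB by linarith
      qed
    qed
  qed
  then show ?thesis unfolding B_def C_def .
qed

lemma dseq_mono:
  assumes "is_kernel P" "is_kernel P'" "0 \<le> \<gamma>"
  shows "\<forall>i j. dseq P R P' R' \<gamma> n i j \<le> dseq P R P' R' \<gamma> (Suc n) i j"
proof (induction n)
  case 0 then show ?case using dseq_nonneg[OF assms, of R R' "Suc 0"] by simp
next
  case (Suc n)
  show ?case
  proof (intro allI)
    fix i j
    have e1: "dseq P R P' R' \<gamma> (Suc n) i j = Max (range (\<lambda>a. \<bar>R i a - R' j a\<bar> + \<gamma> * W1 (P i a) (P' j a) (dseq P R P' R' \<gamma> n)))"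
      by (simp only: dseq.simps(2)[of P R P' R' \<gamma> n])
    have e2: "dseq P R P' R' \<gamma> (Suc (Suc n)) i j = Max (range (\<lambda>a. \<bar>R i a - R' j a\<bar> + \<gamma> * W1 (P i a) (P' j a) (dseq P R P' R' \<gamma> (Suc n))))"
      by (simp only: dseq.simps(2)[of P R P' R' \<gamma> "Suc n"])
    show "dseq P R P' R' \<gamma> (Suc n) i j \<le> dseq P R P' R' \<gamma> (Suc (Suc n)) i j"
      unfolding e1 e2
    proof (rule Max.boundedI)
      show "finite (range (\<lambda>a. \<bar>R i a - R' j a\<bar> + \<gamma> * W1 (P i a) (P' j a) (dseq P R P' R' \<gamma> n)))" by simp
      show "range (\<lambda>a. \<bar>R i a - R' j a\<bar> + \<gamma> * W1 (P i a) (P' j a) (dseq P R P' R' \<gamma> n)) \<noteq> {}" by simp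
      fix x assume "x \<in> range (\<lambda>a. \<bar>R i a - R' j a\<bar> + \<gamma> * W1 (P i a) (P' j a) (dseq P R P' R' \<gamma> n))"
      then obtain a where x: "x = \<bar>R i a - R' j a\<bar> + \<gamma> * W1 (P i a) (P' j a) (dseq P R P' R' \<gamma> n)" by auto
      have "W1 (P i a) (P' j a) (dseq P R P' R' \<gamma> n) \<le> W1 (P i a) (P' j a) (dseq P R P' R' \<gamma> (Suc n))"
        by (rule W1_mono[OF kernelD[OF assms(1)] kernelD[OF assms(2)] dseq_nonneg[OF assms] Suc])
      then have "x \<le> \<bar>R i a - R' j a\<bar> + \<gamma> * W1 (P i a) (P' j a) (dseq P R P' R' \<gamma> (Suc n))"
        using x assms(3) by (simp add: mult_left_mono)
      also have "\<dots> \<le> Max (range (\<lambda>a. \<bar>R i a - R' j a\<bar> + \<gamma> * W1 (P i a) (P' j a) (dseq P R P' R' \<gamma> (Suc n))))"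
        by (rule Max_ge) auto
      finally show "x \<le> Max (range (\<lambda>a. \<bar>R i a - R' j a\<bar> + \<gamma> * W1 (P i a) (P' j a) (dseq P R P' R' \<gamma> (Suc n))))" .
    qed
  qed
qed

lemma dseq_conv:
  assumes "is_kernel P" "is_kernel P'" "0 \<le> \<gamma>" "\<gamma> < 1"
  shows "(\<lambda>n. dseq P R P' R' \<gamma> n si sj) \<longlonglongrightarrow> dbar P R P' R' \<gamma> si sj"
proof -
  have "convergent (\<lambda>n. dseq P R P' R' \<gamma> n si sj)"
  proof (rule Bseq_monoseq_convergent)
    show "Bseq (\<lambda>n. dseq P R P' R' \<gamma> n si sj)"
      using dseq_bound[OF assms, of R R'] dseq_nonneg[OF assms(1-3), of R R']
      by (intro BseqI'[where K="Max (range (\<lambda>(s,t,a). \<bar>R s a - R' t a\<bar>)) / (1 - \<gamma>)"]) auto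
    show "monoseq (\<lambda>n. dseq P R P' R' \<gamma> n si sj)"
      unfolding monoseq_Suc using dseq_mono[OF assms(1-3)] by blast
  qed
  then show ?thesis unfolding dbar_def by (simp add: convergent_LIMSEQ_iff)
qed

theorem corollary1:
  fixes P P' :: "'s::finite \<Rightarrow> 'a::finite \<Rightarrow> 's \<Rightarrow> real"
    and R R' :: "'s \<Rightarrow> 'a \<Rightarrow> real"
    and \<gamma> :: real
  assumes "is_kernel P" and "is_kernel P'"
    and "0 < \<gamma>" and "\<gamma> < 1"
  shows "\<forall>si sj. \<bar>opt_value P R \<gamma> si - opt_value P' R' \<gamma> sj\<bar> \<le> dbar P R P' R' \<gamma> si sj"
proof (intro allI)
  fix si sj
  have g: "0 \<le> \<gamma>" using assms by simp
  define Vn where "Vn n = ((bellman P R \<gamma>) ^^ n) (\<lambda>_. 0)" for n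
  define Wn where "Wn n = ((bellman P' R' \<gamma>) ^^ n) (\<lambda>_. 0)" for n
  have key: "\<forall>i j. \<bar>Vn n i - Wn n j\<bar> \<le> dseq P R P' R' \<gamma> n i j" for n
  proof (induction n)
    case 0 then show ?case by (simp add: Vn_def Wn_def)
  next
    case (Suc n)
    show ?case
    proof (intro allI)
      fix i j
      have "\<bar>bellman P R \<gamma> (Vn n) i - bellman P' R' \<gamma> (Wn n) j\<bar> \<le> dseq P R P' R' \<gamma> (Suc n) i j"
        unfolding dseq.simps by (rule bellman_step[OF assms(1,2) g Suc])
      then show "\<bar>Vn (Suc n) i - Wn (Suc n) j\<bar> \<le> dseq P R P' R' \<gamma> (Suc n) i j"
        by (simp add: Vn_def Wn_def)
    qed
  qed
  have "(\<lambda>n. \<bar>Vn n si - Wn n sj\<bar>) \<longlonglongrightarrow> \<bar>opt_value P R \<gamma> si - opt_value P' R' \<gamma> sj\<bar>"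
    unfolding Vn_def Wn_def
    by (intro tendsto_intros opt_value_limit assms g)
  then show "\<bar>opt_value P R \<gamma> si - opt_value P' R' \<gamma> sj\<bar> \<le> dbar P R P' R' \<gamma> si sj"
  proof (rule LIMSEQ_le[OF _ dseq_conv[OF assms(1,2) g assms(4)]])
    show "\<exists>N. \<forall>n\<ge>N. \<bar>Vn n si - Wn n sj\<bar> \<le> dseq P R P' R' \<gamma> n si sj" using key by blast
  qed
qed

end
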